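(* If $\sigma:{}^{<\omega}\omega\to\omega$ is suitable, then $\mathscr C_{\mathcal M}\preceq\mathscr{ED}_\sigma\preceq\mathscr{ED}$. In particular these three relational systems have the same norms, i.e. $\|\mathscr C_{\mathcal M}\|=\|\mathscr{ED}_\sigma\|=\|\mathscr{ED}\|$ and $\|\mathscr C_{\mathcal M}^\perp\|=\|\mathscr{ED}_\sigma^\perp\|=\|\mathscr{ED}^\perp\|$.
   Context: A relational system is a triple $\langle X,Y,R\rangle$ with $R\subseteq X\times Y$; its norm is the least cardinality of $B\subseteq Y$ such that for every $x\in X$ there is $y\in B$ with $(x,y)\in R$. Its dual is $\langle Y,X,R^\perp\rangle$ where $(y,x)\in R^\perp$ iff $(x,y)\notin R$. A Tukey connection from $\langle X,Y,R\rangle$ to $\langle X',Y',R'\rangle$ is a pair of maps $\rho_-:X\to X'$, $\rho_+:Y'\to Y$ such that $(\rho_-(x),y')\in R'$ implies $(x,\rho_+(y'))\in R$; its existence is written $\langle X,Y,R\rangle\preceq\langle X',Y',R'\rangle$. Let $\mathcal M$ be the ideal of meagre subsets of the Baire space ${}^\omega\omega$, and $\mathscr C_{\mathcal M}=\langle{}^\omega\omega,\mathcal M,\in\rangle$. For $x,y\in{}^\omega\omega$, $x=^\infty y$ means $x(k)=y(k)$ for infinitely many $k$; $\mathscr{ED}=\langle{}^\omega\omega,{}^\omega\omega,\neq^\infty\rangle$ where $x\neq^\infty y$ means not $x=^\infty y$. For $\sigma:{}^{<\omega}\omega\to\omega$, $x=^\infty_\sigma y$ means there are infinitely many $k$ with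 $x(k)=y(k)$ and $\sigma(x\restriction k)=\sigma(y\restriction k)$; $\mathscr{ED}_\sigma=\langle{}^\omega\omega,{}^\omega\omega,\neq^\infty_\sigma\rangle$ where $x\neq^\infty_\sigma y$ means not $x=^\infty_\sigma y$. The function $\sigma$ is suitable if for every $s\in{}^{<\omega}\omega$ and $x\in{}^\omega\omega$ there are $k\in\omega$ and $t\in{}^k\omega$ with $s\subseteq t$ and $\sigma(t)=\sigma(x\restriction k)$. *)

theory Defs
  imports "HOL-Analysis.Analysis" "HOL-Library.Equipollence"
begin

type_synonym ('a,'b) relsys = "'a set \<times> 'b set \<times> ('a \<Rightarrow> 'b \<Rightarrow> bool)"

definition dual_rs :: "('a,'b) relsys \<Rightarrow> ('b,'a) relsys" where
  "dual_rs S = (case S of (X, Y, R) \<Rightarrow> (Y, X, \<lambda>y x. \<not> R x y))"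

definition bounding_family :: "('a,'b) relsys \<Rightarrow> 'b set \<Rightarrow> bool" where
  "bounding_family S B = (case S of (X, Y, R) \<Rightarrow> B \<subseteq> Y \<and> (\<forall>x\<in>X. \<exists>y\<in>B. R x y))"

(* ||S|| \<le> ||T||: every witness family for T has one for S of no larger cardinality *)
definition norm_le :: "('a,'b) relsys \<Rightarrow> ('c,'d) relsys \<Rightarrow> bool" where
  "norm_le S T = (\<forall>B. bounding_family T B \<longrightarrow> (\<exists>B'. bounding_family S B' \<and> B' \<lesssim> B))"

definition norm_eq :: "('a,'b) relsys \<Rightarrow> ('c,'d) relsys \<Rightarrow> bool" where
  "norm_eq S T = (norm_le S T \<and> norm_le T S)"

definition tukey_le :: "('a,'b) relsys \<Rightarrow> ('c,'d) relsys \<Rightarrow> bool" where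
  "tukey_le S T = (case S of (X, Y, R) \<Rightarrow> case T of (X', Y', R') \<Rightarrow>
     (\<exists>rm rp. rm \<in> X \<rightarrow> X' \<and> rp \<in> Y' \<rightarrow> Y \<and>
        (\<forall>x\<in>X. \<forall>y'\<in>Y'. R' (rm x) y' \<longrightarrow> R x (rp y'))))"

(* Baire space nat \<Rightarrow> nat with the product topology (nat discrete) *)
definition nowhere_dense :: "(nat \<Rightarrow> nat) set \<Rightarrow> bool" where
  "nowhere_dense A = (interior (closure A) = {})"

definition meagre :: "(nat \<Rightarrow> nat) set \<Rightarrow> bool" where
  "meagre A = (\<exists>F :: nat \<Rightarrow> (nat \<Rightarrow> nat) set.
                 (\<forall>n. nowhere_dense (F n)) \<and> A \<subseteq> (\<Union>n. F n))"

definition C_M :: "(nat \<Rightarrow> nat, (nat \<Rightarrow> nat) set) relsys" where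
  "C_M = (UNIV, {A. meagre A}, \<lambda>x A. x \<in> A)"

definition inf_eq :: "(nat \<Rightarrow> nat) \<Rightarrow> (nat \<Rightarrow> nat) \<Rightarrow> bool" where
  "inf_eq x y = infinite {k. x k = y k}"

definition ED :: "(nat \<Rightarrow> nat, nat \<Rightarrow> nat) relsys" where
  "ED = (UNIV, UNIV, \<lambda>x y. \<not> inf_eq x y)"

(* sequences in ^{<\<omega>}\<omega> are lists; x\<restriction>k = map x [0..<k] *)
definition restr :: "(nat \<Rightarrow> nat) \<Rightarrow> nat \<Rightarrow> nat list" where
  "restr x k = map x [0..<k]"

definition inf_eq_sigma :: "(nat list \<Rightarrow> nat) \<Rightarrow> (nat \<Rightarrow> nat) \<Rightarrow> (nat \<Rightarrow> nat) \<Rightarrow> bool" where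
  "inf_eq_sigma \<sigma> x y = infinite {k. x k = y k \<and> \<sigma> (restr x k) = \<sigma> (restr y k)}"

definition ED_sigma :: "(nat list \<Rightarrow> nat) \<Rightarrow> (nat \<Rightarrow> nat, nat \<Rightarrow> nat) relsys" where
  "ED_sigma \<sigma> = (UNIV, UNIV, \<lambda>x y. \<not> inf_eq_sigma \<sigma> x y)"

definition suitable :: "(nat list \<Rightarrow> nat) \<Rightarrow> bool" where
  "suitable \<sigma> = (\<forall>s x. \<exists>k t. length t = k \<and> (\<exists>u. t = s @ u) \<and> \<sigma> t = \<sigma> (restr x k))"

end

theory Submission
  imports Defs "HOL-Library.Countable" "HOL-Library.Infinite_Set"
begin


lemma tukey_norm_le:
  assumes "tukey_le (X,Y,R) (X',Y',R')" shows "norm_le (X,Y,R) (X',Y',R')"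
proof -
  obtain rm rp where rm: "rm \<in> X \<rightarrow> X'" and rp: "rp \<in> Y' \<rightarrow> Y"
    and c: "\<forall>x\<in>X. \<forall>y'\<in>Y'. R' (rm x) y' \<longrightarrow> R x (rp y')"
    using assms unfolding tukey_le_def by auto
  show ?thesis unfolding norm_le_def bounding_family_def
  proof (clarsimp)
    fix B assume B: "B \<subseteq> Y'" "\<forall>x\<in>X'. \<exists>y\<in>B. R' x y"
    show "\<exists>B'\<subseteq>Y. (\<forall>x\<in>X. \<exists>y\<in>B'. R x y) \<and> B' \<lesssim> B"
    proof (intro exI conjI)
      show "rp ` B \<subseteq> Y" using rp B by auto
      show "\<forall>x\<in>X. \<exists>y\<in>rp ` B. R x y"
      proof
        fix x assume x: "x \<in> X"
        then have "rm x \<in> X'" using rm by auto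
        then obtain y where y: "y \<in> B" "R' (rm x) y" using B by blast
        then have "R x (rp y)" using c x B(1) by blast
        then show "\<exists>y\<in>rp ` B. R x y" using y(1) by blast
      qed
      show "rp ` B \<lesssim> B" by (rule image_lepoll)
    qed
  qed
qed

lemma tukey_dual:
  assumes "tukey_le (X,Y,R) (X',Y',R')"
  shows "tukey_le (dual_rs (X',Y',R')) (dual_rs (X,Y,R))"
proof -
  obtain rm rp where rm: "rm \<in> X \<rightarrow> X'" and rp: "rp \<in> Y' \<rightarrow> Y"
    and c: "\<forall>x\<in>X. \<forall>y'\<in>Y'. R' (rm x) y' \<longrightarrow> R x (rp y')"
    using assms unfolding tukey_le_def by auto
  show ?thesis unfolding tukey_le_def dual_rs_def
    using rm rp c by (auto intro!: exI[of _ rp] exI[of _ rm])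
qed

lemma norm_le_trans: "norm_le S T \<Longrightarrow> norm_le T U \<Longrightarrow> norm_le S U"
  unfolding norm_le_def by (meson lepoll_trans)

lemma inf_eq_sym: "inf_eq x y = inf_eq y x"
  unfolding inf_eq_def by (simp add: eq_commute)

lemma tukey_ED_sigma_ED: "tukey_le (ED_sigma \<sigma>) ED"
  unfolding tukey_le_def ED_sigma_def ED_def inf_eq_def inf_eq_sigma_def
  apply (simp, rule exI[of _ id], simp, rule exI[of _ id], simp)
  done




definition cyl :: "nat list \<Rightarrow> (nat \<Rightarrow> nat) set" where
  "cyl t = {x. restr x (length t) = t}"

lemma length_restr[simp]: "length (restr x n) = n"
  unfolding restr_def by simp

lemma nth_restr[simp]: "i < n \<Longrightarrow> restr x n ! i = x i"
  unfolding restr_def by simp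

lemma restr_eq_iff: "restr x (length t) = t \<longleftrightarrow> (\<forall>i<length t. x i = t!i)"
proof -
  have "restr x (length t) = t \<longleftrightarrow> (length (restr x (length t)) = length t \<and>
          (\<forall>i<length (restr x (length t)). restr x (length t) ! i = t ! i))"
    by (rule list_eq_iff_nth_eq)
  then show ?thesis by simp
qed

lemma mem_cyl: "x \<in> cyl t \<longleftrightarrow> (\<forall>i<length t. x i = t!i)"
  unfolding cyl_def using restr_eq_iff by blast

lemma open_cyl: "open (cyl t)"
proof -
  have "cyl t = {f. \<forall>i\<in>{..<length t}. f (id i) \<in> {t!i}}"
    by (auto simp: mem_cyl)
  moreover have "open {f::nat\<Rightarrow>nat. \<forall>i\<in>{..<length t}. f (id i) \<in> {t!i}}"
    by (rule product_topology_basis') (auto simp: open_discrete)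
  ultimately show ?thesis by simp
qed

lemma cyl_nonempty: "\<exists>x. x \<in> cyl t"
  by (rule exI[of _ "\<lambda>i. if i < length t then t!i else 0"]) (auto simp: mem_cyl)

lemma cyl_append: "cyl (s @ u) \<subseteq> cyl s"
  by (auto simp: mem_cyl nth_append)

lemma restr_in_cyl: "x \<in> cyl (restr x n)"
  by (simp add: mem_cyl)

lemma restr_add: "restr x (a + b) = restr x a @ map x [a..<a+b]"
  proof -
  have "[0..<a + b] = [0..<a] @ [a..<a + b]" by (rule upt_add_eq_append) simp
  then show ?thesis unfolding restr_def by (simp only: map_append)
qed

lemma restr_le: "a \<le> n \<Longrightarrow> \<exists>u. restr x n = restr x a @ u"
  using restr_add[of x a "n - a"] by auto

lemma open_nbhd:
  assumes "open U" "x \<in> U" shows "\<exists>k. \<forall>n\<ge>k. cyl (restr x n) \<subseteq> U"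
proof -
  obtain V where V: "finite {i. V i \<noteq> (UNIV::nat set)}" "x \<in> Pi\<^sub>E UNIV V" "Pi\<^sub>E UNIV V \<subseteq> U"
    using assms unfolding open_fun_def openin_product_topology_alt by force
  define k where "k = Suc (Max ({i. V i \<noteq> UNIV} \<union> {0}))"
  have k: "V i \<noteq> UNIV \<Longrightarrow> i < k" for i
    unfolding k_def using V(1) by (simp add: le_imp_less_Suc)
  have "cyl (restr x n) \<subseteq> U" if "n \<ge> k" for n
  proof
    fix y assume y: "y \<in> cyl (restr x n)"
    have "\<forall>i. y i \<in> V i"
    proof
      fix i show "y i \<in> V i"
      proof (cases "V i = UNIV")
        case False
        then have "i < n" using k that by fastforce
        then have "y i = x i" using y by (simp add: mem_cyl)
        moreover have "x i \<in> V i" using V(2) by (simp add: PiE_iff)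
        ultimately show ?thesis by simp
      qed simp
    qed
    then have "y \<in> Pi\<^sub>E UNIV V" by (simp add: PiE_iff)
    then show "y \<in> U" using V(3) by blast
  qed
  then show ?thesis by blast
qed

lemma nwd_crit:
  assumes "\<And>s. n \<le> length s \<Longrightarrow> \<exists>u. cyl (s @ u) \<inter> F = {}"
  shows "nowhere_dense F"
  unfolding nowhere_dense_def
proof (rule ccontr)
  assume "interior (closure F) \<noteq> {}"
  then obtain z where z: "z \<in> interior (closure F)" by blast
  obtain k where k: "\<forall>m\<ge>k. cyl (restr z m) \<subseteq> interior (closure F)"
    using open_nbhd[OF open_interior z] by blast
  define s where "s = restr z (max k n)"
  obtain u where u: "cyl (s @ u) \<inter> F = {}" using assms[of s] unfolding s_def by auto
  have "cyl (s @ u) \<inter> closure F = {}" using u open_Int_closure_eq_empty[OF open_cyl] by blast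
  moreover have "cyl s \<subseteq> interior (closure F)" using k unfolding s_def by simp
  then have "cyl (s @ u) \<subseteq> closure F"
    using cyl_append[of s u] interior_subset[of "closure F"] by blast
  moreover obtain w where "w \<in> cyl (s @ u)" using cyl_nonempty by blast
  ultimately show False by blast
qed

lemma nwd_ext:
  assumes "nowhere_dense F" shows "\<exists>u. cyl (s @ u) \<inter> F = {}"
proof -
  have "\<not> cyl s \<subseteq> closure F"
  proof
    assume "cyl s \<subseteq> closure F"
    then have "cyl s \<subseteq> interior (closure F)" using open_cyl interior_maximal by blast
    then show False using assms cyl_nonempty[of s] unfolding nowhere_dense_def by blast
  qed
  then obtain x where x: "x \<in> cyl s" "x \<notin> closure F" by blast
  obtain k where k: "\<forall>m\<ge>k. cyl (restr x m) \<subseteq> - closure F"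
    using open_nbhd[of "- closure F" x] x by auto
  define n where "n = max k (length s)"
  obtain u where u: "restr x n = restr x (length s) @ u" using restr_le[of "length s" n x] n_def by auto
  have "restr x (length s) = s" using x(1) unfolding cyl_def by simp
  then have "cyl (s @ u) \<subseteq> - closure F" using k u n_def by (metis max.cobounded1)
  then show ?thesis using closure_subset by blast
qed

definition valid_e :: "(nat \<Rightarrow> nat list \<Rightarrow> nat list) \<Rightarrow> bool" where
  "valid_e e = (\<forall>m s. \<exists>u. e m s = s @ u)"

definition hits :: "(nat \<Rightarrow> nat list \<Rightarrow> nat list) \<Rightarrow> (nat \<Rightarrow> nat) \<Rightarrow> bool" where
  "hits e x = (\<forall>n. \<exists>m\<ge>n. \<exists>s. x \<in> cyl (e m s))"

primrec iter_ext :: "(nat \<Rightarrow> nat list \<Rightarrow> nat list) \<Rightarrow> nat \<Rightarrow> nat list \<Rightarrow> nat list" where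
  "iter_ext E 0 s = E 0 s"
| "iter_ext E (Suc m) s = E (Suc m) (iter_ext E m s)"

lemma iter_ext_valid: "valid_e E \<Longrightarrow> valid_e (iter_ext E)"
  unfolding valid_e_def
proof (intro allI)
  fix m s assume v: "\<forall>m s. \<exists>u. E m s = s @ u"
  show "\<exists>u. iter_ext E m s = s @ u"
    by (induction m) (use v in auto, metis append.assoc)
qed

lemma iter_ext_avoid:
  assumes v: "valid_e E" and av: "\<And>i t. cyl (E i t) \<inter> F i = {}" and "i \<le> m"
  shows "cyl (iter_ext E m s) \<inter> F i = {}"
  using assms(3)
proof (induction m)
  case 0 then show ?case using av by simp
next
  case (Suc m)
  show ?case
  proof (cases "i = Suc m")
    case True then show ?thesis using av by simp
  next
    case False
    then have prev: "cyl (iter_ext E m s) \<inter> F i = {}" using Suc by simp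
    obtain u where eu: "E (Suc m) (iter_ext E m s) = iter_ext E m s @ u"
      using v unfolding valid_e_def by blast
    have sub: "cyl (iter_ext E (Suc m) s) \<subseteq> cyl (iter_ext E m s)"
      using eu cyl_append[of "iter_ext E m s" u] by simp
    show ?thesis using prev sub by blast
  qed
qed

lemma meagre_e:
  assumes "meagre A"
  shows "\<exists>e. valid_e e \<and> (\<forall>x\<in>A. \<not> hits e x)"
proof -
  obtain F :: "nat \<Rightarrow> (nat \<Rightarrow> nat) set" where F1: "\<forall>n. nowhere_dense (F n)" and F2: "A \<subseteq> (\<Union>n. F n)"
    using assms unfolding meagre_def by blast
  have F: "nowhere_dense (F n)" "A \<subseteq> (\<Union>n. F n)" for n using F1 F2 by auto
  define E where "E = (\<lambda>i s. s @ (SOME u. cyl (s @ u) \<inter> F i = {}))"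
  have vE: "valid_e E" unfolding valid_e_def E_def by simp
  have avE: "cyl (E i t) \<inter> F i = {}" for i t
    unfolding E_def using someI_ex[OF nwd_ext[OF F(1)[of i], of t]] by simp
  show ?thesis
  proof (intro exI conjI ballI)
    show "valid_e (iter_ext E)" using iter_ext_valid[OF vE] .
    fix x assume "x \<in> A"
    then obtain n where n: "x \<in> F n" using F(2) by blast
    have no: "x \<notin> cyl (iter_ext E m s)" if "m \<ge> n" for m s
      using iter_ext_avoid[OF vE avE that] n by blast
    show "\<not> hits (iter_ext E) x" unfolding hits_def
    proof
      assume "\<forall>n. \<exists>m\<ge>n. \<exists>s. x \<in> cyl (iter_ext E m s)"
      then obtain m s where "m \<ge> n" "x \<in> cyl (iter_ext E m s)" by blast
      then show False using no by blast
    qed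
  qed
qed

lemma tukey_CM_EDs:
  assumes "suitable \<sigma>"
  shows "tukey_le C_M (ED_sigma \<sigma>)"
proof -
  define rp where "rp = (\<lambda>y. {x. \<not> inf_eq_sigma \<sigma> x y})"
  have "meagre (rp y)" for y
  proof -
    define F where "F = (\<lambda>n. {x. \<forall>k\<ge>n. \<not> (x k = y k \<and> \<sigma> (restr x k) = \<sigma> (restr y k))})"
    have "rp y \<subseteq> (\<Union>n. F n)"
    proof
      fix x assume "x \<in> rp y"
      then have fin: "finite {k. x k = y k \<and> \<sigma> (restr x k) = \<sigma> (restr y k)}"
        unfolding rp_def inf_eq_sigma_def by simp
      then obtain n where "\<forall>k\<in>{k. x k = y k \<and> \<sigma> (restr x k) = \<sigma> (restr y k)}. k < n"
        using finite_nat_bounded by blast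
      then have "x \<in> F n" unfolding F_def by auto
      then show "x \<in> (\<Union>n. F n)" by blast
    qed
    moreover have "nowhere_dense (F n)" for n
    proof (rule nwd_crit[of n])
      fix s :: "nat list" assume s: "n \<le> length s"
      obtain k t where kt: "length t = k" "\<exists>u. t = s @ u" "\<sigma> t = \<sigma> (restr y k)"
        using assms unfolding suitable_def by blast
      obtain u where u: "t = s @ u" using kt by blast
      have "cyl (s @ (u @ [y k])) \<inter> F n = {}"
      proof (rule ccontr)
        assume "cyl (s @ (u @ [y k])) \<inter> F n \<noteq> {}"
        then obtain w where w: "w \<in> cyl (t @ [y k])" "w \<in> F n" using u by auto
        have wk: "w k = y k" using w(1) kt(1) by (simp add: mem_cyl nth_append)
        have "restr w k = t" using w(1) kt(1) cyl_append[of t "[y k]"] unfolding cyl_def by auto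
        moreover have "k \<ge> n" using s u kt(1) by simp
        ultimately show False using w(2) wk kt(3) unfolding F_def by auto
      qed
      then show "\<exists>u. cyl (s @ u) \<inter> F n = {}" by blast
    qed
    ultimately show ?thesis unfolding meagre_def by blast
  qed
  then show ?thesis unfolding tukey_le_def C_M_def ED_sigma_def
    by (auto intro!: exI[of _ id] exI[of _ rp] simp: rp_def)
qed



definition size_l :: "nat list \<Rightarrow> nat" where
  "size_l s = sum_list (map Suc s)"

lemma size_l_append[simp]: "size_l (a @ b) = size_l a + size_l b"
  unfolding size_l_def by simp

lemma size_l_simps[simp]: "size_l [] = 0" "size_l (x # xs) = Suc x + size_l xs"
  unfolding size_l_def by simp_all

lemma length_le_size_l: "length s \<le> size_l s"
  by (induction s) auto

lemma mem_le_size_l: "a \<in> set s \<Longrightarrow> a < size_l s"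
  by (induction s) auto

definition hist :: "nat \<Rightarrow> nat list set" where
  "hist W = {s. size_l s \<le> W}"

lemma finite_hist: "finite (hist W)"
proof -
  have "hist W \<subseteq> {xs. set xs \<subseteq> {0..W} \<and> length xs \<le> W}"
  proof
    fix s assume "s \<in> hist W"
    then have sW: "size_l s \<le> W" unfolding hist_def by simp
    have "length s \<le> W" using length_le_size_l[of s] sW by linarith
    moreover have "set s \<subseteq> {0..W}"
    proof
      fix a assume "a \<in> set s"
      then have "a < size_l s" by (rule mem_le_size_l)
      then show "a \<in> {0..W}" using sW by simp
    qed
    ultimately show "s \<in> {xs. set xs \<subseteq> {0..W} \<and> length xs \<le> W}" by simp
  qed
  then show ?thesis using finite_lists_length_le[of "{0..W}" W] finite_subset by blast
qed

definition hs :: "nat \<Rightarrow> nat list list" where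
  "hs W = (SOME l. set l = hist W)"

lemma set_hs: "set (hs W) = hist W"
  unfolding hs_def using someI_ex[OF finite_list[OF finite_hist]] by blast

definition stepf :: "(nat \<Rightarrow> nat list \<Rightarrow> nat list) \<Rightarrow> nat \<Rightarrow> nat list \<Rightarrow> nat list \<Rightarrow> nat list" where
  "stepf e W t s = t @ drop (length (s @ t)) (e W (s @ t))"

definition univ :: "(nat \<Rightarrow> nat list \<Rightarrow> nat list) \<Rightarrow> nat \<Rightarrow> nat list" where
  "univ e W = foldl (stepf e W) [] (hs W) @ [0]"

lemma fold_stepf:
  assumes "valid_e e"
  shows "(\<exists>v. foldl (stepf e W) t0 l = t0 @ v) \<and>
         (\<forall>s\<in>set l. \<exists>t' w. s @ foldl (stepf e W) t0 l = e W (s @ t') @ w)"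
proof (induction l arbitrary: t0)
  case Nil then show ?case by simp
next
  case (Cons s l)
  obtain d where d: "e W (s @ t0) = (s @ t0) @ d" using assms unfolding valid_e_def by blast
  have st: "stepf e W t0 s = t0 @ d" unfolding stepf_def using d by simp
  obtain v where v: "foldl (stepf e W) (t0 @ d) l = (t0 @ d) @ v"
    and r: "\<forall>s\<in>set l. \<exists>t' w. s @ foldl (stepf e W) (t0 @ d) l = e W (s @ t') @ w"
    using Cons[of "t0 @ d"] by blast
  have f1: "foldl (stepf e W) t0 (s # l) = t0 @ d @ v" using st v by simp
  have f2: "s @ foldl (stepf e W) t0 (s # l) = e W (s @ t0) @ v"
    using st v d by simp
  have e2: "\<exists>t' w. s @ foldl (stepf e W) t0 (s # l) = e W (s @ t') @ w"
    using f2 by blast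
  have e3: "\<forall>s'\<in>set l. \<exists>t' w. s' @ foldl (stepf e W) t0 (s # l) = e W (s' @ t') @ w"
    using r st by simp
  show ?case
  proof (intro conjI)
    show "\<exists>v. foldl (stepf e W) t0 (s # l) = t0 @ v" using f1 by blast
    show "\<forall>s'\<in>set (s # l). \<exists>t' w. s' @ foldl (stepf e W) t0 (s # l) = e W (s' @ t') @ w"
      using e2 e3 by (simp only: list.set insert_iff ball_simps)
  qed
qed

lemma univ_hits:
  assumes "valid_e e" "size_l s \<le> W"
  shows "\<exists>t' w. s @ univ e W = e W (s @ t') @ w"
proof -
  have "s \<in> set (hs W)" using assms(2) set_hs hist_def by auto
  then obtain t' w where "s @ foldl (stepf e W) [] (hs W) = e W (s @ t') @ w"
    using fold_stepf[OF assms(1), of W "[]" "hs W"] by blast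
  then show ?thesis unfolding univ_def by (metis append.assoc)
qed

primrec ipart :: "(nat \<Rightarrow> nat list \<Rightarrow> nat list) \<Rightarrow> nat \<Rightarrow> nat" where
  "ipart e 0 = 0"
| "ipart e (Suc k) = ipart e k + size_l (univ e (ipart e k)) + 1"

lemma ipart_smono: "strict_mono (ipart e)"
  by (rule strict_monoI_Suc) simp

lemma ipart_ge: "k \<le> ipart e k"
  by (induction k) auto

definition kappa :: "(nat \<Rightarrow> nat list \<Rightarrow> nat list) \<Rightarrow> nat \<Rightarrow> nat" where
  "kappa e n = (LEAST k. n \<le> ipart e k)"

lemma kappa: "n \<le> ipart e (kappa e n)"
  unfolding kappa_def by (rule LeastI[of _ n]) (rule ipart_ge)

definition Gfun :: "(nat \<Rightarrow> nat list \<Rightarrow> nat list) \<Rightarrow> nat \<Rightarrow> nat" where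
  "Gfun e n = ipart e (kappa e n + 2)"

primrec jpart :: "(nat \<Rightarrow> nat) \<Rightarrow> nat \<Rightarrow> nat" where
  "jpart u 0 = 0"
| "jpart u (Suc m) = jpart u m + 1 + (\<Sum>i\<le>jpart u m. u i)"

lemma jpart_smono: "strict_mono (jpart u)"
  by (rule strict_monoI_Suc) simp

lemma jpart_ge: "m \<le> jpart u m"
  by (induction m) auto

lemma jpart_bound: "n \<le> jpart u m \<Longrightarrow> u n < jpart u (Suc m)"
proof -
  assume "n \<le> jpart u m"
  then have "u n \<le> (\<Sum>i\<le>jpart u m. u i)"
    by (intro member_le_sum) auto
  then show ?thesis by simp
qed

lemma jpart_block: "\<exists>m. jpart u m \<le> n \<and> n < jpart u (Suc m)"
proof (induction n)
  case 0 then show ?case by (intro exI[of _ 0]) simp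
next
  case (Suc n)
  then obtain m where m: "jpart u m \<le> n" "n < jpart u (Suc m)" by blast
  show ?case
  proof (cases "Suc n < jpart u (Suc m)")
    case True then show ?thesis using m by (intro exI[of _ m]) simp
  next
    case False
    then have "Suc n = jpart u (Suc m)" using m by simp
    moreover have "jpart u (Suc m) < jpart u (Suc (Suc m))" by simp
    ultimately show ?thesis by (intro exI[of _ "Suc m"]) simp
  qed
qed

definition goodA :: "(nat \<Rightarrow> nat list \<Rightarrow> nat list) \<Rightarrow> (nat \<Rightarrow> nat) \<Rightarrow> nat set" where
  "goodA e u = {m. \<exists>k. jpart u m \<le> ipart e k \<and> ipart e (Suc k) \<le> jpart u (Suc m)}"

lemma goodA_infinite:
  assumes "inf_eq u (Gfun e)"
  shows "infinite (goodA e u)"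
  unfolding infinite_nat_iff_unbounded_le
proof
  fix N
  have S: "infinite {n. u n = Gfun e n}" using assms unfolding inf_eq_def by simp
  then obtain n where n: "n \<ge> jpart u N" "u n = Gfun e n"
    unfolding infinite_nat_iff_unbounded_le by blast
  obtain m where m: "jpart u m \<le> n" "n < jpart u (Suc m)" using jpart_block by blast
  have "jpart u N < jpart u (Suc m)" using n(1) m(2) by linarith
  then have "N < Suc m" using strict_mono_less[OF jpart_smono] by blast
  define k where "k = kappa e n"
  have k: "n \<le> ipart e k" using kappa k_def by simp
  have un: "u n = ipart e (Suc (Suc k))" using n(2) unfolding Gfun_def k_def by simp
  have ub: "u n < jpart u (Suc (Suc m))" using jpart_bound[of n u "Suc m"] m by simp
  show "\<exists>m'\<ge>N. m' \<in> goodA e u"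
  proof (cases "ipart e (Suc k) \<le> jpart u (Suc m)")
    case True
    then have "m \<in> goodA e u" unfolding goodA_def using m k by (auto intro!: exI[of _ k])
    then show ?thesis using \<open>N < Suc m\<close> by (intro exI[of _ m]) simp
  next
    case False
    then have "Suc m \<in> goodA e u" unfolding goodA_def using un ub
      by (auto intro!: exI[of _ "Suc k"])
    then show ?thesis using \<open>N < Suc m\<close> by (intro exI[of _ "Suc m"]) simp
  qed
qed



definition target :: "nat set \<Rightarrow> (nat \<Rightarrow> nat) \<Rightarrow> nat \<Rightarrow> nat" where
  "target A h l = to_nat (map (\<lambda>a. (a, h a)) (map (enumerate A) [0..<2^l]))"

definition claimset :: "(nat \<Rightarrow> nat) \<Rightarrow> nat \<Rightarrow> nat set" where
  "claimset z l = (if length (from_nat (z l) :: (nat \<times> nat) list) \<le> 2^l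
                   then fst ` set (from_nat (z l) :: (nat \<times> nat) list) else {})"

definition zstar :: "(nat \<Rightarrow> nat) \<Rightarrow> nat \<Rightarrow> nat" where
  "zstar z a = (if \<exists>l. a \<in> claimset z l
     then the (map_of (from_nat (z (LEAST l. a \<in> claimset z l)) :: (nat \<times> nat) list) a) else 0)"

lemma map_of_graph: "map_of (map (\<lambda>a. (a, h a)) xs) a = (if a \<in> set xs then Some (h a) else None)"
  by (induction xs) auto

lemma finite_claimset: "finite (claimset z l)"
  unfolding claimset_def by auto

lemma card_claimset: "card (claimset z l) \<le> 2^l"
proof -
  let ?P = "from_nat (z l) :: (nat \<times> nat) list"
  have "card (fst ` set ?P) \<le> length ?P"
    using card_image_le[of "set ?P" fst] card_length[of ?P] by simp
  then show ?thesis unfolding claimset_def by auto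
qed

lemma sum_pow2_less: "(\<Sum>i<l. (2::nat)^i) < 2^l"
  by (induction l) auto

lemma card_claims: "card (\<Union>l'\<in>{..<l}. claimset z l') < 2^l"
proof -
  have "card (\<Union>l'\<in>{..<l}. claimset z l') \<le> (\<Sum>l'<l. card (claimset z l'))"
    by (rule card_UN_le) simp
  also have "\<dots> \<le> (\<Sum>l'<l. 2^l')" by (rule sum_mono) (rule card_claimset)
  also have "\<dots> < 2^l" by (rule sum_pow2_less)
  finally show ?thesis .
qed

lemma onA:
  assumes A: "infinite A" and eq: "inf_eq z (target A h)"
  shows "infinite {a\<in>A. zstar z a = h a}"
proof -
  define Mt where "Mt = {l. z l = target A h l}"
  have Mt: "infinite Mt" using eq unfolding inf_eq_def Mt_def by simp
  define D where "D = (\<lambda>l. enumerate A ` {..<(2::nat)^l})"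
  define C where "C = (\<lambda>l. \<Union>l'\<in>{..<l}. claimset z l')"
  have cardD: "card (D l) = 2^l" for l
  proof -
    have "inj_on (enumerate A) {..<2^l}"
      using inj_enumerate[OF A] by (rule inj_on_subset) simp
    then show ?thesis unfolding D_def by (simp add: card_image)
  qed
  have ex: "\<exists>a. a \<in> D l \<and> a \<notin> C l" for l
  proof (rule ccontr)
    assume "\<not> ?thesis"
    then have "D l \<subseteq> C l" by blast
    moreover have "finite (C l)" unfolding C_def using finite_claimset by auto
    ultimately have "card (D l) \<le> card (C l)" by (rule card_mono[rotated])
    then show False using cardD[of l] card_claims[of z l] unfolding C_def by simp
  qed
  define pick where "pick = (\<lambda>l. SOME a. a \<in> D l \<and> a \<notin> C l)"
  have pick: "pick l \<in> D l" "pick l \<notin> C l" for l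
    unfolding pick_def using someI_ex[OF ex[of l]] by auto
  define P where "P = (\<lambda>l. map (\<lambda>a. (a, h a)) (map (enumerate A) [0..<2^l]))"
  have claimMt: "claimset z l = D l" if "l \<in> Mt" for l
  proof -
    have "from_nat (z l) = P l" using that unfolding Mt_def target_def P_def by simp
    moreover have "length (P l) = 2^l" unfolding P_def by simp
    ultimately show ?thesis unfolding claimset_def D_def P_def
      by (auto simp: image_image)
  qed
  have good: "pick l \<in> A \<and> zstar z (pick l) = h (pick l)" if "l \<in> Mt" for l
  proof
    show "pick l \<in> A" using pick(1)[of l] enumerate_in_set[OF A] unfolding D_def by auto
    have inl: "pick l \<in> claimset z l" using claimMt[OF that] pick(1) by simp
    have least: "(LEAST l'. pick l \<in> claimset z l') = l"
    proof (rule Least_equality)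
      show "pick l \<in> claimset z l" by (rule inl)
      fix y assume "pick l \<in> claimset z y"
      then show "l \<le> y" using pick(2)[of l] unfolding C_def by (meson UN_I lessThan_iff not_le_imp_less)
    qed
    have fz: "from_nat (z l) = P l" using that unfolding Mt_def target_def P_def by simp
    have mem: "pick l \<in> set (map (enumerate A) [0..<2^l])" using pick(1)[of l] unfolding D_def by auto
    have ex: "\<exists>l'. pick l \<in> claimset z l'" using inl by blast
    have "zstar z (pick l) = the (map_of (P l) (pick l))"
      unfolding zstar_def using ex least fz by simp
    moreover have "map_of (P l) (pick l) = Some (h (pick l))"
      unfolding P_def using map_of_graph[of h "map (enumerate A) [0..<2^l]" "pick l"] mem by simp
    ultimately show "zstar z (pick l) = h (pick l)" by simp
  qed
  have inj: "inj_on pick Mt"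
  proof (rule inj_onI)
    fix l1 l2 assume l: "l1 \<in> Mt" "l2 \<in> Mt" "pick l1 = pick l2"
    show "l1 = l2"
    proof (rule ccontr)
      assume "l1 \<noteq> l2"
      then consider "l1 < l2" | "l2 < l1" by linarith
      then show False
      proof cases
        case 1
        have "pick l1 \<in> C l2" using claimMt[OF l(1)] pick(1)[of l1] 1 unfolding C_def by auto
        then show False using pick(2)[of l2] l(3) by simp
      next
        case 2
        have "pick l2 \<in> C l1" using claimMt[OF l(2)] pick(1)[of l2] 2 unfolding C_def by auto
        then show False using pick(2)[of l1] l(3) by simp
      qed
    qed
  qed
  have "pick ` Mt \<subseteq> {a\<in>A. zstar z a = h a}" using good by auto
  moreover have "infinite (pick ` Mt)" using inj Mt finite_imageD by blast
  ultimately show ?thesis using finite_subset by blast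
qed



definition kof :: "(nat \<Rightarrow> nat list \<Rightarrow> nat list) \<Rightarrow> (nat \<Rightarrow> nat) \<Rightarrow> nat \<Rightarrow> nat" where
  "kof e u m = (LEAST k. jpart u m \<le> ipart e k \<and> ipart e (Suc k) \<le> jpart u (Suc m))"

definition hfun :: "(nat \<Rightarrow> nat list \<Rightarrow> nat list) \<Rightarrow> (nat \<Rightarrow> nat) \<Rightarrow> nat \<Rightarrow> nat" where
  "hfun e u m = to_nat (univ e (ipart e (kof e u m)))"

definition hprime :: "(nat \<Rightarrow> nat list \<Rightarrow> nat list) \<Rightarrow> (nat \<Rightarrow> nat) \<Rightarrow> nat \<Rightarrow> nat" where
  "hprime e u = target (goodA e u) (hfun e u)"

definition blk :: "(nat \<Rightarrow> nat) \<Rightarrow> (nat \<Rightarrow> nat) \<Rightarrow> nat \<Rightarrow> nat list" where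
  "blk z u m = (if size_l (from_nat (zstar z m) :: nat list) + 1 \<le> jpart u (Suc m) - jpart u m
                then (from_nat (zstar z m) :: nat list) else []) @ [0]"

definition pre :: "(nat \<Rightarrow> nat) \<Rightarrow> (nat \<Rightarrow> nat) \<Rightarrow> nat \<Rightarrow> nat list" where
  "pre z u m = concat (map (blk z u) [0..<m])"

definition Xf :: "(nat \<Rightarrow> nat) \<Rightarrow> (nat \<Rightarrow> nat) \<Rightarrow> nat \<Rightarrow> nat" where
  "Xf z u i = pre z u (Suc i) ! i"

lemma pre_Suc[simp]: "pre z u (Suc m) = pre z u m @ blk z u m"
  unfolding pre_def by simp

lemma pre_0[simp]: "pre z u 0 = []"
  unfolding pre_def by simp

lemma length_pre: "m \<le> length (pre z u m)"
  by (induction m) (auto simp: blk_def)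

lemma pre_prefix: "a \<le> b \<Longrightarrow> \<exists>w. pre z u b = pre z u a @ w"
proof (induction b)
  case 0 then show ?case by simp
next
  case (Suc b)
  show ?case
  proof (cases "a = Suc b")
    case False
    then obtain w where "pre z u b = pre z u a @ w" using Suc by fastforce
    then show ?thesis by simp
  qed simp
qed

lemma size_blk: "size_l (blk z u m) \<le> jpart u (Suc m) - jpart u m"
proof -
  have "jpart u m < jpart u (Suc m)" by simp
  then show ?thesis unfolding blk_def by auto
qed

lemma size_pre: "size_l (pre z u m) \<le> jpart u m"
proof (induction m)
  case 0 then show ?case by simp
next
  case (Suc m)
  have "jpart u m < jpart u (Suc m)" by simp
  then show ?case using Suc size_blk[of z u m] by simp
qed

lemma Xf_cyl: "Xf z u \<in> cyl (pre z u m)"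
  unfolding mem_cyl
proof (intro allI impI)
  fix i assume i: "i < length (pre z u m)"
  define b where "b = max m (Suc i)"
  obtain w1 where w1: "pre z u b = pre z u m @ w1" using pre_prefix[of m b] b_def by auto
  obtain w2 where w2: "pre z u b = pre z u (Suc i) @ w2" using pre_prefix[of "Suc i" b] b_def by auto
  have i2: "i < length (pre z u (Suc i))" using length_pre[of "Suc i" z u] by simp
  have "pre z u b ! i = pre z u m ! i" using w1 i by (simp add: nth_append del: pre_Suc)
  moreover have "pre z u b ! i = pre z u (Suc i) ! i" using w2 i2 by (simp add: nth_append del: pre_Suc)
  ultimately show "Xf z u i = pre z u m ! i" unfolding Xf_def by simp
qed

lemma core:
  assumes v: "valid_e e" and hu: "inf_eq u (Gfun e)" and hz: "inf_eq z (hprime e u)"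
  shows "hits e (Xf z u)"
  unfolding hits_def
proof
  fix n
  define A where "A = goodA e u"
  have A: "infinite A" using goodA_infinite[OF hu] A_def by simp
  have S: "infinite {a\<in>A. zstar z a = hfun e u a}"
    using onA[OF A, of z "hfun e u"] hz unfolding hprime_def A_def by simp
  then obtain a where a: "a \<ge> n" "a \<in> A" "zstar z a = hfun e u a"
    unfolding infinite_nat_iff_unbounded_le by blast
  define k where "k = kof e u a"
  have kk: "jpart u a \<le> ipart e k \<and> ipart e (Suc k) \<le> jpart u (Suc a)"
  proof -
    from a(2) obtain k0 where "jpart u a \<le> ipart e k0 \<and> ipart e (Suc k0) \<le> jpart u (Suc a)"
      unfolding A_def goodA_def by blast
    then show ?thesis unfolding k_def kof_def by (rule LeastI)
  qed
  define W where "W = ipart e k"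
  have Wn: "n \<le> W" using a(1) kk jpart_ge[of a u] unfolding W_def by linarith
  have c: "(from_nat (zstar z a) :: nat list) = univ e W"
    using a(3) unfolding hfun_def W_def k_def by simp
  have "size_l (univ e W) + 1 \<le> jpart u (Suc a) - jpart u a"
    using kk unfolding W_def by simp
  then have b: "blk z u a = univ e W @ [0]" unfolding blk_def using c by simp
  have sp: "size_l (pre z u a) \<le> W" using size_pre[of z u a] kk unfolding W_def by linarith
  obtain t' w where tw: "pre z u a @ univ e W = e W (pre z u a @ t') @ w"
    using univ_hits[OF v sp] by blast
  have "pre z u (Suc a) = e W (pre z u a @ t') @ (w @ [0])" using b tw by simp
  then have "Xf z u \<in> cyl (e W (pre z u a @ t'))"
    using Xf_cyl[of z u "Suc a"] cyl_append by (metis subsetD)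
  then show "\<exists>m\<ge>n. \<exists>s. Xf z u \<in> cyl (e m s)" using Wn by blast
qed



lemma normA: "norm_le ED C_M"
  unfolding norm_le_def bounding_family_def C_M_def ED_def
proof (simp, intro allI impI)
  fix B :: "(nat \<Rightarrow> nat) set set"
  assume B: "B \<subseteq> Collect meagre \<and> (\<forall>x. \<exists>y\<in>B. x \<in> y)"
  show "\<exists>B'. (\<forall>x. \<exists>y\<in>B'. \<not> inf_eq x y) \<and> B' \<lesssim> B"
  proof (rule ccontr)
    assume nb: "\<not> ?thesis"
    have key: "\<exists>x. \<forall>y\<in>F. inf_eq x y" if F: "F \<lesssim> B" for F :: "(nat \<Rightarrow> nat) set"
    proof (rule ccontr)
      assume "\<not> (\<exists>x. \<forall>y\<in>F. inf_eq x y)"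
      then have "\<forall>x. \<exists>y\<in>F. \<not> inf_eq x y" by blast
      then have "\<exists>B'. (\<forall>x. \<exists>y\<in>B'. \<not> inf_eq x y) \<and> B' \<lesssim> B" using F by blast
      then show False using nb by blast
    qed
    define eA where "eA = (\<lambda>A. SOME e. valid_e e \<and> (\<forall>x\<in>A. \<not> hits e x))"
    have eA: "valid_e (eA A) \<and> (\<forall>x\<in>A. \<not> hits (eA A) x)" if "A \<in> B" for A
    proof -
      have "meagre A" using that B by blast
      then have "\<exists>e. valid_e e \<and> (\<forall>x\<in>A. \<not> hits e x)" by (rule meagre_e)
      then show ?thesis unfolding eA_def by (rule someI_ex)
    qed
    obtain u where u: "\<forall>y\<in>(\<lambda>A. Gfun (eA A)) ` B. inf_eq u y"
      using key[OF image_lepoll] by blast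
    obtain z where z: "\<forall>y\<in>(\<lambda>A. hprime (eA A) u) ` B. inf_eq z y"
      using key[OF image_lepoll] by blast
    obtain A where A: "A \<in> B" "Xf z u \<in> A" using B by blast
    have "inf_eq u (Gfun (eA A))" using u A(1) by blast
    moreover have "inf_eq z (hprime (eA A) u)" using z A(1) by blast
    ultimately have "hits (eA A) (Xf z u)"
      using core[of "eA A" u z] eA[OF A(1)] by blast
    then show False using eA[OF A(1)] A(2) by blast
  qed
qed

lemma ED_dual_infinite:
  assumes Z: "\<forall>x. \<exists>y\<in>Z. inf_eq y x"
  shows "infinite Z"
proof
  assume fin: "finite Z"
  define g where "g = (\<lambda>n. Suc (\<Sum>y\<in>Z. y n))"
  obtain y where y: "y \<in> Z" "inf_eq y g" using Z by blast
  have lt: "y n < g n" for n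
    unfolding g_def using member_le_sum[of y Z "\<lambda>y. y n"] fin y(1) by simp
  have "{k. y k = g k} = {}"
  proof (rule ccontr)
    assume "{k. y k = g k} \<noteq> {}"
    then obtain k where "y k = g k" by blast
    then show False using lt[of k] by simp
  qed
  then show False using y(2) unfolding inf_eq_def by simp
qed

lemma normB_main:
  fixes Z :: "(nat \<Rightarrow> nat) set"
  assumes Z': "\<forall>x. \<exists>y\<in>Z. inf_eq y x"
  shows "\<exists>B'. (\<forall>A. meagre A \<longrightarrow> (\<exists>x\<in>B'. x \<notin> A)) \<and> B' \<lesssim> Z"
proof -
  define X where "X = (\<lambda>(z, u). Xf z u) ` (Z \<times> Z)"
  have "X \<lesssim> Z \<times> Z" unfolding X_def by (rule image_lepoll)
  moreover have "Z \<times> Z \<approx> Z"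
    using card_of_Times_same_infinite[OF ED_dual_infinite[OF Z']]
    by (simp add: eqpoll_iff_card_of_ordIso)
  ultimately have XZ: "X \<lesssim> Z" by (rule lepoll_trans2)
  have "\<exists>x\<in>X. x \<notin> A" if mA: "meagre A" for A
  proof -
    obtain e where e: "valid_e e" "\<forall>x\<in>A. \<not> hits e x" using meagre_e[OF mA] by blast
    obtain u where u: "u \<in> Z" "inf_eq u (Gfun e)" using Z' by blast
    obtain z where z: "z \<in> Z" "inf_eq z (hprime e u)" using Z' by blast
    have "hits e (Xf z u)" using core[OF e(1) u(2) z(2)] .
    moreover have "Xf z u \<in> X" unfolding X_def using u z by force
    ultimately show ?thesis using e(2) by blast
  qed
  then show ?thesis using XZ by blast
qed

lemma normB: "norm_le (dual_rs C_M) (dual_rs ED)"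
  unfolding norm_le_def bounding_family_def dual_rs_def C_M_def ED_def
  using normB_main by simp

lemma tukey_norm_le': "tukey_le S T \<Longrightarrow> norm_le S T"
  using tukey_norm_le by (metis prod_cases3)

lemma tukey_dual': "tukey_le S T \<Longrightarrow> tukey_le (dual_rs T) (dual_rs S)"
  using tukey_dual by (metis prod_cases3)

theorem mainTheorem2:
  fixes \<sigma> :: "nat list \<Rightarrow> nat"
  assumes "suitable \<sigma>"
  shows "tukey_le C_M (ED_sigma \<sigma>) \<and> tukey_le (ED_sigma \<sigma>) ED
       \<and> norm_eq C_M (ED_sigma \<sigma>) \<and> norm_eq (ED_sigma \<sigma>) ED
       \<and> norm_eq (dual_rs C_M) (dual_rs (ED_sigma \<sigma>))
       \<and> norm_eq (dual_rs (ED_sigma \<sigma>)) (dual_rs ED)"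
proof -
  have t1: "tukey_le C_M (ED_sigma \<sigma>)" using tukey_CM_EDs[OF assms] .
  have t2: "tukey_le (ED_sigma \<sigma>) ED" by (rule tukey_ED_sigma_ED)
  have n1: "norm_le C_M (ED_sigma \<sigma>)" using tukey_norm_le'[OF t1] .
  have n2: "norm_le (ED_sigma \<sigma>) ED" using tukey_norm_le'[OF t2] .
  have nd1: "norm_le (dual_rs (ED_sigma \<sigma>)) (dual_rs C_M)" using tukey_norm_le'[OF tukey_dual'[OF t1]] .
  have nd2: "norm_le (dual_rs ED) (dual_rs (ED_sigma \<sigma>))" using tukey_norm_le'[OF tukey_dual'[OF t2]] .
  have a1: "norm_le (ED_sigma \<sigma>) C_M" using norm_le_trans[OF n2 normA] .
  have a2: "norm_le ED (ED_sigma \<sigma>)" using norm_le_trans[OF normA n1] .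
  have a3: "norm_le (dual_rs C_M) (dual_rs (ED_sigma \<sigma>))" using norm_le_trans[OF normB nd2] .
  have a4: "norm_le (dual_rs (ED_sigma \<sigma>)) (dual_rs ED)" using norm_le_trans[OF nd1 normB] .
  show ?thesis
    unfolding norm_eq_def using t1 t2 n1 n2 nd1 nd2 a1 a2 a3 a4 by blast
qed

end
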